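(* Let $(L,\vee,\wedge,\to,\gets,f,g,0,1)$ be a complete and weakly atomic HBGC-algebra. Then there exists a GC-frame $\mathcal{F}=(X,\leq,R)$ such that $(L,\vee,\wedge,\to,\gets,f,g,0,1)$ is isomorphic to the complex algebra $\mathbb{HB}_{\rm GC}(\mathcal{F})=(\mathcal{T}_\leq,\cup,\cap,\to,\gets,{}^\blacktriangle,{}^\blacktriangledown,\emptyset,X)$.
   Context: A Heyting–Brouwer algebra $(L,\vee,\wedge,\to,\gets,0,1)$ is a bounded lattice in which for all $a,b$ the relative pseudocomplement $a\to b$ (greatest $x$ with $a\wedge x\leq b$) exists and the co-implication $a\gets b$ (least $x$ with $b\leq a\vee x$) exists. A pair $(f,g)$ of maps $L\to L$ is an (order-preserving) Galois connection if $f(a)\leq b\iff a\leq g(b)$ for all $a,b\in L$. An HBGC-algebra is a Heyting–Brouwer algebra equipped with an order-preserving Galois connection $(f,g)$ on $L$; it is complete if its underlying lattice is complete, and weakly atomic if its underlying lattice is weakly atomic, i.e. whenever $x<y$ there exist $a,b$ with $x\leq a\prec b\leq y$, where $\prec$ is the covering relation. A GC-frame $(X,\leq,R)$ is a set $X$ with a quasiorder $\leq$ and a relation $R\subseteq X\times X$ such that $x\leq x'$, $x\,R\,y$, $y'\leq y$ imply $x'\,R\,y'$. $\mathcal{T}_\leq$ is the set of upward $\leq$-closed subsets of $X$. For $A\subseteq X$: $A^\blacktriangle=\{x\mid x\,R\,y\text{ for some }y\in A\}$, $A^\blacktriangledown=\{x\mid y\,R\,x\text{ implies }y\in A\}$.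 On $\mathcal{T}_\leq$: $A\to B=\{a\in X\mid \forall b\geq a\,(b\in A\Rightarrow b\in B)\}$ and $A\gets B=\{a\in X\mid \exists b\leq a\,(b\notin A\text{ and }b\in B)\}$. Isomorphism is with respect to all operations $\vee,\wedge,\to,\gets,f,g,0,1$ ($f\leftrightarrow{}^\blacktriangle$, $g\leftrightarrow{}^\blacktriangledown$). *)

theory Defs
  imports Main
begin

definition hb_imp :: "'a::complete_lattice \<Rightarrow> 'a \<Rightarrow> 'a" where
  "hb_imp a b = (GREATEST x. inf a x \<le> b)"

definition hb_coimp :: "'a::complete_lattice \<Rightarrow> 'a \<Rightarrow> 'a" where
  "hb_coimp a b = (LEAST x. b \<le> sup a x)"

definition heyting_brouwer :: "'a::complete_lattice itself \<Rightarrow> bool" where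
  "heyting_brouwer _ \<longleftrightarrow>
     (\<forall>a b::'a. \<exists>x. inf a x \<le> b \<and> (\<forall>y. inf a y \<le> b \<longrightarrow> y \<le> x)) \<and>
     (\<forall>a b::'a. \<exists>x. b \<le> sup a x \<and> (\<forall>y. b \<le> sup a y \<longrightarrow> x \<le> y))"

definition galois_conn :: "('a::order \<Rightarrow> 'a) \<Rightarrow> ('a \<Rightarrow> 'a) \<Rightarrow> bool" where
  "galois_conn f g \<longleftrightarrow> (\<forall>a b. f a \<le> b \<longleftrightarrow> a \<le> g b)"

definition covers :: "'a::order \<Rightarrow> 'a \<Rightarrow> bool" where
  "covers a b \<longleftrightarrow> a < b \<and> \<not> (\<exists>z. a < z \<and> z < b)"

definition weakly_atomic :: "'a::order itself \<Rightarrow> bool" where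
  "weakly_atomic _ \<longleftrightarrow>
     (\<forall>x y::'a. x < y \<longrightarrow> (\<exists>a b. x \<le> a \<and> covers a b \<and> b \<le> y))"

definition gc_frame :: "'b set \<Rightarrow> ('b \<Rightarrow> 'b \<Rightarrow> bool) \<Rightarrow> ('b \<Rightarrow> 'b \<Rightarrow> bool) \<Rightarrow> bool" where
  "gc_frame X le R \<longleftrightarrow>
     (\<forall>x y. le x y \<longrightarrow> x \<in> X \<and> y \<in> X) \<and>
     (\<forall>x y. R x y \<longrightarrow> x \<in> X \<and> y \<in> X) \<and>
     (\<forall>x\<in>X. le x x) \<and>
     (\<forall>x y z. le x y \<longrightarrow> le y z \<longrightarrow> le x z) \<and>
     (\<forall>x x' y y'. le x x' \<longrightarrow> R x y \<longrightarrow> le y' y \<longrightarrow> R x' y')"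

definition up_sets :: "'b set \<Rightarrow> ('b \<Rightarrow> 'b \<Rightarrow> bool) \<Rightarrow> 'b set set" where
  "up_sets X le = {A. A \<subseteq> X \<and> (\<forall>a b. a \<in> A \<longrightarrow> le a b \<longrightarrow> b \<in> A)}"

definition up_imp :: "'b set \<Rightarrow> ('b \<Rightarrow> 'b \<Rightarrow> bool) \<Rightarrow> 'b set \<Rightarrow> 'b set \<Rightarrow> 'b set" where
  "up_imp X le A B = {a\<in>X. \<forall>b. le a b \<longrightarrow> b \<in> A \<longrightarrow> b \<in> B}"

definition up_coimp :: "'b set \<Rightarrow> ('b \<Rightarrow> 'b \<Rightarrow> bool) \<Rightarrow> 'b set \<Rightarrow> 'b set \<Rightarrow> 'b set" where
  "up_coimp X le A B = {a\<in>X. \<exists>b. le b a \<and> b \<notin> A \<and> b \<in> B}"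

definition blacktri_up :: "'b set \<Rightarrow> ('b \<Rightarrow> 'b \<Rightarrow> bool) \<Rightarrow> 'b set \<Rightarrow> 'b set" where
  "blacktri_up X R A = {x\<in>X. \<exists>y\<in>A. R x y}"

definition blacktri_down :: "'b set \<Rightarrow> ('b \<Rightarrow> 'b \<Rightarrow> bool) \<Rightarrow> 'b set \<Rightarrow> 'b set" where
  "blacktri_down X R A = {x\<in>X. \<forall>y. R y x \<longrightarrow> y \<in> A}"

end

theory Submission
  imports Defs
begin

lemma imp_char:
  fixes a b y :: "'a::complete_lattice"
  assumes "heyting_brouwer TYPE('a)"
  shows "inf a y \<le> b \<longleftrightarrow> y \<le> hb_imp a b"
proof -
  obtain x where x: "inf a x \<le> b" "\<And>y. inf a y \<le> b \<Longrightarrow> y \<le> x"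
    using assms unfolding heyting_brouwer_def by blast
  have "hb_imp a b = x" unfolding hb_imp_def
    by (rule Greatest_equality) (use x in auto)
  moreover have "inf a y \<le> b" if "y \<le> x"
    using order.trans[OF inf_mono[OF order_refl that] x(1)] .
  ultimately show ?thesis using x(2) by auto
qed

lemma coimp_char:
  fixes a b y :: "'a::complete_lattice"
  assumes "heyting_brouwer TYPE('a)"
  shows "b \<le> sup a y \<longleftrightarrow> hb_coimp a b \<le> y"
proof -
  obtain x where x: "b \<le> sup a x" "\<And>y. b \<le> sup a y \<Longrightarrow> x \<le> y"
    using assms unfolding heyting_brouwer_def by blast
  have "hb_coimp a b = x" unfolding hb_coimp_def
    by (rule Least_equality) (use x in auto)
  moreover have "b \<le> sup a y" if "x \<le> y"
    using order.trans[OF x(1) sup_mono[OF order_refl that]] .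
  ultimately show ?thesis using x(2) by auto
qed

lemma JID:
  fixes a :: "'a::complete_lattice"
  assumes "heyting_brouwer TYPE('a)"
  shows "inf a (Sup S) = Sup ((inf a) ` S)"
proof (rule antisym)
  have "\<forall>s\<in>S. s \<le> hb_imp a (Sup ((inf a) ` S))"
  proof
    fix s assume "s \<in> S"
    hence "inf a s \<le> Sup ((inf a) ` S)" by (rule SUP_upper)
    thus "s \<le> hb_imp a (Sup ((inf a) ` S))" using imp_char[OF assms] by blast
  qed
  hence "Sup S \<le> hb_imp a (Sup ((inf a) ` S))" by (simp add: Sup_le_iff)
  thus "inf a (Sup S) \<le> Sup ((inf a) ` S)" using imp_char[OF assms] by blast
next
  show "Sup ((inf a) ` S) \<le> inf a (Sup S)"
    by (rule SUP_least) (rule inf_mono[OF order_refl Sup_upper])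
qed

definition jp :: "'a::complete_lattice \<Rightarrow> bool" where
  "jp p \<longleftrightarrow> (\<forall>S. p \<le> Sup S \<longrightarrow> (\<exists>s\<in>S. p \<le> s))"

lemma jp_exists:
  fixes c d :: "'a::complete_lattice"
  assumes hb: "heyting_brouwer TYPE('a)" and cov: "covers c d"
  shows "\<exists>p. jp p \<and> p \<le> d \<and> \<not> p \<le> c"
proof -
  define p where "p = hb_coimp c d"
  have cd: "c < d" and nz: "\<And>z. \<not> (c < z \<and> z < d)" using cov unfolding covers_def by auto
  have dp: "d \<le> sup c p" using coimp_char[OF hb] p_def by blast
  have X: "p \<le> x" if "x \<le> d" "\<not> x \<le> c" for x
  proof -
    have "sup c x = d"
    proof (rule ccontr)
      assume "sup c x \<noteq> d"
      moreover have "sup c x \<le> d" using that cd by simp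
      ultimately have "sup c x < d" by (metis order.not_eq_order_implies_strict)
      moreover have "c < sup c x" using that(2) by (metis sup.cobounded1 sup.cobounded2 order.not_eq_order_implies_strict)
      ultimately show False using nz by blast
    qed
    thus ?thesis using coimp_char[OF hb] p_def by (metis order_refl)
  qed
  have pd: "p \<le> d" using X[of d] cd by auto
  have pc: "\<not> p \<le> c"
  proof
    assume "p \<le> c"
    hence "sup c p = c" by (simp add: sup_absorb1)
    thus False using dp cd by simp
  qed
  have "jp p" unfolding jp_def
  proof (intro allI impI)
    fix S assume "p \<le> Sup S"
    hence peq: "p = Sup ((inf p) ` S)" using JID[OF hb, of p S] by (simp add: inf_absorb1)
    show "\<exists>s\<in>S. p \<le> s"
    proof (rule ccontr)
      assume "\<not> (\<exists>s\<in>S. p \<le> s)"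
      have "\<forall>s\<in>S. inf p s \<le> c"
      proof
        fix s assume "s \<in> S"
        show "inf p s \<le> c"
        proof (rule ccontr)
          assume "\<not> inf p s \<le> c"
          moreover have "inf p s \<le> d" using pd inf.coboundedI1 by blast
          ultimately have "p \<le> inf p s" using X by blast
          hence "p \<le> s" by simp
          thus False using \<open>s \<in> S\<close> \<open>\<not> (\<exists>s\<in>S. p \<le> s)\<close> by blast
        qed
      qed
      hence "Sup ((inf p) ` S) \<le> c" by (simp add: SUP_le_iff)
      thus False using pc peq by simp
    qed
  qed
  thus ?thesis using pd pc by blast
qed

lemma density:
  fixes a :: "'a::complete_lattice"
  assumes hb: "heyting_brouwer TYPE('a)" and wa: "weakly_atomic TYPE('a)"
  shows "a = Sup {j. jp j \<and> j \<le> a}"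
proof (rule ccontr)
  define b where "b = Sup {j. jp j \<and> j \<le> a}"
  have ba: "b \<le> a" unfolding b_def by (auto intro: Sup_least)
  assume "a \<noteq> Sup {j. jp j \<and> j \<le> a}"
  hence "b < a" using ba b_def by auto
  then obtain c d where "b \<le> c" "covers c d" "d \<le> a"
    using wa unfolding weakly_atomic_def by blast
  then obtain p where p: "jp p" "p \<le> d" "\<not> p \<le> c" using jp_exists[OF hb] by blast
  have "p \<le> b" unfolding b_def using p \<open>d \<le> a\<close> by (auto intro: Sup_upper)
  thus False using p \<open>b \<le> c\<close> by auto
qed

lemma jp_sup: "jp j \<Longrightarrow> j \<le> sup a b \<Longrightarrow> j \<le> a \<or> j \<le> b"
  unfolding jp_def by (drule spec[of _ "{a,b}"]) auto

lemma jp_bot: "jp j \<Longrightarrow> \<not> j \<le> bot"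
  unfolding jp_def by (drule spec[of _ "{}"]) auto

lemma gc_mono: "galois_conn f g \<Longrightarrow> a \<le> b \<Longrightarrow> f a \<le> f (b::'a::order)"
  unfolding galois_conn_def
proof -
  assume gc: "\<forall>a b. (f a \<le> b) = (a \<le> g b)" and ab: "a \<le> b"
  have "b \<le> g (f b)" using gc by blast
  hence "a \<le> g (f b)" using ab by (rule order.trans[rotated])
  thus "f a \<le> f b" using gc by blast
qed

lemma gc_Sup: assumes gc: "galois_conn f g" shows "f (Sup S) = Sup (f ` (S::'a::complete_lattice set))"
proof (rule antisym)
  have "\<forall>s\<in>S. s \<le> g (Sup (f ` S))"
  proof
    fix s assume "s \<in> S"
    hence "f s \<le> Sup (f ` S)" by (rule SUP_upper)
    thus "s \<le> g (Sup (f ` S))" using gc unfolding galois_conn_def by blast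
  qed
  hence "Sup S \<le> g (Sup (f ` S))" by (simp add: Sup_le_iff)
  thus "f (Sup S) \<le> Sup (f ` S)" using gc unfolding galois_conn_def by blast
  show "Sup (f ` S) \<le> f (Sup S)" by (rule SUP_least) (rule gc_mono[OF gc Sup_upper])
qed

theorem theorem4p4:
  fixes f g :: "'a::complete_lattice \<Rightarrow> 'a"
  assumes "heyting_brouwer TYPE('a)"
    and "galois_conn f g"
    and "weakly_atomic TYPE('a)"
  shows "\<exists>(X::'a set) le R \<phi>.
           gc_frame X le R \<and>
           bij_betw \<phi> (UNIV::'a set) (up_sets X le) \<and>
           (\<forall>a b. \<phi> (sup a b) = \<phi> a \<union> \<phi> b) \<and>
           (\<forall>a b. \<phi> (inf a b) = \<phi> a \<inter> \<phi> b) \<and>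
           (\<forall>a b. \<phi> (hb_imp a b) = up_imp X le (\<phi> a) (\<phi> b)) \<and>
           (\<forall>a b. \<phi> (hb_coimp a b) = up_coimp X le (\<phi> a) (\<phi> b)) \<and>
           (\<forall>a. \<phi> (f a) = blacktri_up X R (\<phi> a)) \<and>
           (\<forall>a. \<phi> (g a) = blacktri_down X R (\<phi> a)) \<and>
           \<phi> bot = {} \<and> \<phi> top = X"
proof -
  note hb = assms(1) and gc = assms(2) and wa = assms(3)
  note dens = density[OF hb wa]
  define X where "X = {j::'a. jp j}"
  define le where "le = (\<lambda>x y::'a. x \<in> X \<and> y \<in> X \<and> y \<le> x)"
  define R where "R = (\<lambda>x y::'a. x \<in> X \<and> y \<in> X \<and> x \<le> f y)"
  define \<phi> where "\<phi> = (\<lambda>a::'a. {j\<in>X. j \<le> a})"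
  have dens': "\<And>a. a = Sup (\<phi> a)" using dens unfolding \<phi>_def X_def by simp
  have "gc_frame X le R"
    unfolding gc_frame_def le_def R_def
  proof (intro conjI allI impI ballI; (elim conjE)?)
    fix x x' y y' :: 'a
    assume "x' \<le> x" "x \<le> f y" "y \<le> y'"
    moreover have "f y \<le> f y'" using gc_mono[OF gc] \<open>y \<le> y'\<close> by blast
    ultimately show "x' \<le> f y'" by (metis order.trans)
  qed (auto intro: order.trans)
  moreover have "bij_betw \<phi> UNIV (up_sets X le)"
  proof (rule bij_betwI')
    show "\<phi> x = \<phi> y \<longleftrightarrow> x = y" for x y using dens' by metis
    show "\<phi> x \<in> up_sets X le" for x
      unfolding up_sets_def \<phi>_def le_def by auto
    show "\<exists>x\<in>UNIV. D = \<phi> x" if "D \<in> up_sets X le" for D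
    proof
      have D: "D \<subseteq> X" "\<And>a b. a \<in> D \<Longrightarrow> b \<in> X \<Longrightarrow> b \<le> a \<Longrightarrow> b \<in> D"
        using that unfolding up_sets_def le_def by auto
      show "D = \<phi> (Sup D)"
      proof
        show "D \<subseteq> \<phi> (Sup D)" using D unfolding \<phi>_def by (auto intro: Sup_upper)
        show "\<phi> (Sup D) \<subseteq> D" unfolding \<phi>_def X_def
          using D unfolding X_def jp_def by blast
      qed
    qed simp
  qed
  moreover have "\<forall>a b. \<phi> (sup a b) = \<phi> a \<union> \<phi> b"
    unfolding \<phi>_def X_def using jp_sup by (auto intro: le_supI1 le_supI2)
  moreover have "\<forall>a b. \<phi> (inf a b) = \<phi> a \<inter> \<phi> b"
    unfolding \<phi>_def by auto
  moreover have "\<forall>a b. \<phi> (hb_imp a b) = up_imp X le (\<phi> a) (\<phi> b)"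
  proof (intro allI equalityI subsetI)
    fix a b j assume "j \<in> \<phi> (hb_imp a b)"
    hence j: "j \<in> X" "j \<le> hb_imp a b" unfolding \<phi>_def by auto
    hence "inf a j \<le> b" using imp_char[OF hb] by blast
    thus "j \<in> up_imp X le (\<phi> a) (\<phi> b)" using j unfolding up_imp_def le_def \<phi>_def
      by (auto intro: order_trans[OF _ \<open>inf a j \<le> b\<close>])
  next
    fix a b j assume "j \<in> up_imp X le (\<phi> a) (\<phi> b)"
    hence j: "j \<in> X" "\<And>k. k \<in> X \<Longrightarrow> k \<le> j \<Longrightarrow> k \<le> a \<Longrightarrow> k \<le> b"
      unfolding up_imp_def le_def \<phi>_def by auto
    have "inf a j \<le> b"
      by (subst dens'[of "inf a j"]) (auto simp: \<phi>_def intro!: Sup_least j(2))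
    thus "j \<in> \<phi> (hb_imp a b)" using j(1) imp_char[OF hb] unfolding \<phi>_def by blast
  qed
  moreover have "\<forall>a b. \<phi> (hb_coimp a b) = up_coimp X le (\<phi> a) (\<phi> b)"
  proof (intro allI equalityI subsetI)
    fix a b j assume "j \<in> \<phi> (hb_coimp a b)"
    hence j: "j \<in> X" "j \<le> hb_coimp a b" unfolding \<phi>_def by auto
    define Y where "Y = {k\<in>X. k \<le> b \<and> \<not> k \<le> a}"
    have "b \<le> sup a (Sup Y)"
    proof (subst dens'[of b], rule Sup_least)
      fix k assume "k \<in> \<phi> b"
      thus "k \<le> sup a (Sup Y)" unfolding \<phi>_def Y_def
        by (cases "k \<le> a") (auto intro: le_supI1 le_supI2 Sup_upper)
    qed
    hence "j \<le> Sup Y" using j coimp_char[OF hb] by (meson order_trans)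
    then obtain k where "k \<in> Y" "j \<le> k" using j(1) unfolding X_def jp_def by blast
    thus "j \<in> up_coimp X le (\<phi> a) (\<phi> b)"
      using j(1) unfolding up_coimp_def le_def \<phi>_def Y_def by auto
  next
    fix a b j assume "j \<in> up_coimp X le (\<phi> a) (\<phi> b)"
    then obtain k where k: "j \<in> X" "k \<in> X" "j \<le> k" "\<not> k \<le> a" "k \<le> b"
      unfolding up_coimp_def le_def \<phi>_def by auto
    have "b \<le> sup a (hb_coimp a b)" using coimp_char[OF hb] by blast
    hence "k \<le> hb_coimp a b" using k jp_sup unfolding X_def by (metis mem_Collect_eq order_trans)
    thus "j \<in> \<phi> (hb_coimp a b)" using k unfolding \<phi>_def by auto
  qed
  moreover have "\<forall>a. \<phi> (f a) = blacktri_up X R (\<phi> a)"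
  proof (intro allI equalityI subsetI)
    fix a j assume "j \<in> \<phi> (f a)"
    hence j: "j \<in> X" "j \<le> f a" unfolding \<phi>_def by auto
    hence "j \<le> Sup (f ` \<phi> a)" using gc_Sup[OF gc, of "\<phi> a"] dens'[of a] by simp
    then obtain y where "y \<in> \<phi> a" "j \<le> f y" using j(1) unfolding X_def jp_def by blast
    thus "j \<in> blacktri_up X R (\<phi> a)" using j unfolding blacktri_up_def R_def \<phi>_def by auto
  next
    fix a j assume "j \<in> blacktri_up X R (\<phi> a)"
    then obtain y where "j \<in> X" "y \<le> a" "j \<le> f y"
      unfolding blacktri_up_def R_def \<phi>_def by auto
    moreover have "f y \<le> f a" using gc_mono[OF gc] \<open>y \<le> a\<close> by blast
    ultimately have "j \<le> f a" by (metis order.trans)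
    thus "j \<in> \<phi> (f a)" unfolding \<phi>_def using \<open>j \<in> X\<close> by blast
  qed
  moreover have "\<forall>a. \<phi> (g a) = blacktri_down X R (\<phi> a)"
  proof (intro allI equalityI subsetI)
    fix a j assume "j \<in> \<phi> (g a)"
    hence "j \<in> X" "f j \<le> a" using gc unfolding \<phi>_def galois_conn_def by auto
    have "y \<le> a" if "R y j" for y
    proof -
      have "y \<le> f j" "y \<in> X" using that R_def by auto
      thus ?thesis using \<open>f j \<le> a\<close> by (metis order.trans)
    qed
    thus "j \<in> blacktri_down X R (\<phi> a)" unfolding blacktri_down_def \<phi>_def
      using \<open>j \<in> X\<close> R_def by auto
  next
    fix a j assume "j \<in> blacktri_down X R (\<phi> a)"
    hence j: "j \<in> X" "\<And>y. y \<in> X \<Longrightarrow> y \<le> f j \<Longrightarrow> y \<le> a"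
      unfolding blacktri_down_def R_def \<phi>_def by auto
    have "f j \<le> a"
      by (subst dens'[of "f j"]) (auto simp: \<phi>_def intro!: Sup_least j(2))
    thus "j \<in> \<phi> (g a)" using gc j(1) unfolding \<phi>_def galois_conn_def by auto
  qed
  moreover have "\<phi> bot = {}" unfolding \<phi>_def X_def using jp_bot by auto
  moreover have "\<phi> top = X" unfolding \<phi>_def by auto
  ultimately show ?thesis
    by (intro exI[of _ X] exI[of _ le] exI[of _ R] exI[of _ \<phi>] conjI) assumption+
qed

end
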